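(* Let $\diamond$ and $\circ$ be associative binary operations on a set $A$ such that $(A,\diamond)$ is a left cancellative semigroup. Consider the statements: (1) There exists a function $\sigma:A\to A$ such that for all $a,b,c\in A$, $\sigma(a)\le a\circ c$ and $a\circ(b\diamond c)=(a\circ b)\diamond\underline{\sigma(a)^\diamond\diamond(a\circ c)}$. (2) There exists a function $\lambda:A\times A\to A$ such that $(A,\diamond,\circ,\lambda)$ is a left semi-truss. (3) For all $a,b,c,d\in A$ with $c\le d$, one has $a\circ c\le a\circ d$ and $a\circ\big(b\diamond\underline{c^\diamond\diamond d}\big)=(a\circ b)\diamond\underline{(a\circ c)^\diamond\diamond(a\circ d)}$. Then (1) implies (2) and (2) implies (3). If moreover $(A,\diamond)$ has an idempotent, then (1), (2), (3) are all equivalent.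
   Context: A left semi-truss $(A,\diamond,\circ,\lambda)$ is a set $A$ with two associative binary operations $\diamond,\circ$ and a function $\lambda:A\times A\to A$ such that $a\circ(b\diamond c)=(a\circ b)\diamond\lambda(a,c)$ for all $a,b,c\in A$. A semigroup $(A,\diamond)$ is left cancellative if $a\diamond b=a\diamond c$ implies $b=c$. On a left cancellative semigroup define the preorder $a\le b$ iff there exists $c\in A$ with $a\diamond c=b$; by left cancellation such $c$ is unique and is denoted $\underline{a^\diamond\diamond b}$ (a single element, characterised by $a\diamond\underline{a^\diamond\diamond b}=b$). *)

theory Defs
  imports Main
begin

definition associative :: "('a \<Rightarrow> 'a \<Rightarrow> 'a) \<Rightarrow> bool" where
  "associative f \<longleftrightarrow> (\<forall>a b c. f (f a b) c = f a (f b c))"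

definition left_cancellative :: "('a \<Rightarrow> 'a \<Rightarrow> 'a) \<Rightarrow> bool" where
  "left_cancellative f \<longleftrightarrow> (\<forall>a b c. f a b = f a c \<longrightarrow> b = c)"

definition sle :: "('a \<Rightarrow> 'a \<Rightarrow> 'a) \<Rightarrow> 'a \<Rightarrow> 'a \<Rightarrow> bool" where
  "sle f a b \<longleftrightarrow> (\<exists>c. f a c = b)"

text \<open>The unique c with a \<diamond> c = b (meaningful when a \<le> b in a left cancellative semigroup).\<close>
definition ldiv :: "('a \<Rightarrow> 'a \<Rightarrow> 'a) \<Rightarrow> 'a \<Rightarrow> 'a \<Rightarrow> 'a" where
  "ldiv f a b = (THE c. f a c = b)"

definition left_semi_truss ::
  "('a \<Rightarrow> 'a \<Rightarrow> 'a) \<Rightarrow> ('a \<Rightarrow> 'a \<Rightarrow> 'a) \<Rightarrow> ('a \<Rightarrow> 'a \<Rightarrow> 'a) \<Rightarrow> bool" where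
  "left_semi_truss d c lam \<longleftrightarrow> associative d \<and> associative c \<and>
     (\<forall>a b e. c a (d b e) = d (c a b) (lam a e))"

end

theory Submission
  imports Defs
begin

lemma ldiv_eq:
  assumes "left_cancellative f" "f a x = b"
  shows "ldiv f a b = x"
  unfolding ldiv_def using assms by (auto simp: left_cancellative_def)

theorem proposition2p2:
  fixes dia :: "'a \<Rightarrow> 'a \<Rightarrow> 'a" and circ :: "'a \<Rightarrow> 'a \<Rightarrow> 'a"
  assumes "associative dia" and "associative circ" and "left_cancellative dia"
  defines "S1 \<equiv> (\<exists>\<sigma> :: 'a \<Rightarrow> 'a. \<forall>a b c.
              sle dia (\<sigma> a) (circ a c) \<and>
              circ a (dia b c) = dia (circ a b) (ldiv dia (\<sigma> a) (circ a c)))"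
      and "S2 \<equiv> (\<exists>lam :: 'a \<Rightarrow> 'a \<Rightarrow> 'a. left_semi_truss dia circ lam)"
      and "S3 \<equiv> (\<forall>a b c d. sle dia c d \<longrightarrow>
              sle dia (circ a c) (circ a d) \<and>
              circ a (dia b (ldiv dia c d)) = dia (circ a b) (ldiv dia (circ a c) (circ a d)))"
  shows "(S1 \<longrightarrow> S2) \<and> (S2 \<longrightarrow> S3) \<and>
         ((\<exists>e. dia e e = e) \<longrightarrow> (S1 \<longleftrightarrow> S2) \<and> (S2 \<longleftrightarrow> S3))"
proof -
  note lc = assms(3)
  have 12: "S1 \<longrightarrow> S2"
  proof
    assume S1
    then obtain \<sigma> where h: "\<And>a b c. sle dia (\<sigma> a) (circ a c) \<and>
              circ a (dia b c) = dia (circ a b) (ldiv dia (\<sigma> a) (circ a c))"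
      unfolding S1_def by blast
    have "left_semi_truss dia circ (\<lambda>a c. ldiv dia (\<sigma> a) (circ a c))"
      unfolding left_semi_truss_def using assms(1,2) h by blast
    then show S2 unfolding S2_def by blast
  qed
  have 23: "S2 \<longrightarrow> S3"
  proof
    assume S2
    then obtain lam where T: "left_semi_truss dia circ lam" unfolding S2_def by blast
    hence L: "\<And>a b e. circ a (dia b e) = dia (circ a b) (lam a e)"
      unfolding left_semi_truss_def by blast
    show S3 unfolding S3_def
    proof (intro allI impI)
      fix a b c d assume "sle dia c d"
      then obtain x where x: "dia c x = d" unfolding sle_def by blast
      have lx: "ldiv dia c d = x" using ldiv_eq[OF lc x] .
      have ad: "dia (circ a c) (lam a x) = circ a d" using L[of a c x] x by simp
      have l2: "ldiv dia (circ a c) (circ a d) = lam a x" using ldiv_eq[OF lc ad] .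
      show "sle dia (circ a c) (circ a d) \<and>
              circ a (dia b (ldiv dia c d)) = dia (circ a b) (ldiv dia (circ a c) (circ a d))"
        using ad lx l2 L unfolding sle_def by metis
    qed
  qed
  have 31: "(\<exists>e. dia e e = e) \<longrightarrow> S3 \<longrightarrow> S1"
  proof (intro impI)
    assume "\<exists>e. dia e e = e" S3
    then obtain e where e: "dia e e = e" by blast
    have el: "\<And>c. dia e c = c"
    proof -
      fix c
      have "dia e (dia e c) = dia e c" using assms(1) e unfolding associative_def by metis
      thus "dia e c = c" using lc unfolding left_cancellative_def by blast
    qed
    have h: "\<And>a b c. sle dia (circ a e) (circ a c) \<and>
              circ a (dia b c) = dia (circ a b) (ldiv dia (circ a e) (circ a c))"
    proof -
      fix a b c
      have "sle dia e c" using el unfolding sle_def by blast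
      moreover have "ldiv dia e c = c" using ldiv_eq[OF lc el] .
      ultimately show "sle dia (circ a e) (circ a c) \<and>
              circ a (dia b c) = dia (circ a b) (ldiv dia (circ a e) (circ a c))"
        using \<open>S3\<close> unfolding S3_def by metis
    qed
    show S1 unfolding S1_def by (rule exI[where x="\<lambda>a. circ a e"]) (simp add: h)
  qed
  show ?thesis using 12 23 31 by blast
qed

end
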